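(* Assume (A1)–(A4) and let $b\in\mathcal H$ be arbitrary. Let $E_k=\rho_1\|r_k\|^2+\rho_2\|s_k\|^2+\rho_2\|y_k-y_{k-1}\|^2$ for $k\ge1$. Then for all $k\ge1$, $$E_{k+1}-E_k\le-\rho_1\|r_{k+1}-r_k\|^2-4c_0\|y_{k+1}-y_k\|^2.$$ In particular $(E_k)$ is monotonically nonincreasing and $\sum_{k=1}^\infty\|y_{k+1}-y_k\|^2<\infty$.
   Context: $\mathcal X,\mathcal Y,\mathcal H$ are real Hilbert spaces. Standing assumptions: (A1) $A:\mathcal X\to\mathcal H$ is bounded linear. (A2) $f:\mathcal Y\to(-\infty,\infty]$ is proper, lower semicontinuous and strongly convex with constant $c_0>0$: $f(ty_1+(1-t)y_2)+c_0t(1-t)\|y_1-y_2\|^2\le tf(y_1)+(1-t)f(y_2)$ for all $y_1,y_2$, $t\in[0,1]$. (A3) $W:\mathscr D(W)\subset\mathcal X\to\mathcal Y$ is a densely defined closed linear operator. (A4) There is $c_1>0$ with $\|Ax\|^2+\|Wx\|^2\ge c_1\|x\|^2$ for all $x\in\mathscr D(W)$. ADMM: fix $\rho_1,\rho_2>0$ and initial $y_0\in\mathcal Y$, $\lambda_0\in\mathcal H$, $\mu_0\in\mathcal Y$. For $k=0,1,\dots$: $x_{k+1}=\arg\min_{x\in\mathscr D(W)}\{\langle\lambda_k,Ax\rangle+\langle\mu_k,Wx\rangle+\frac{\rho_1}{2}\|Ax-b\|^2+\frac{\rho_2}{2}\|Wx-y_k\|^2\}$, $y_{k+1}=\arg\min_{y\in\mathcal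 Y}\{f(y)-\langle\mu_k,y\rangle+\frac{\rho_2}{2}\|Wx_{k+1}-y\|^2\}$, $\lambda_{k+1}=\lambda_k+\rho_1(Ax_{k+1}-b)$, $\mu_{k+1}=\mu_k+\rho_2(Wx_{k+1}-y_{k+1})$. (Under (A1)–(A4) these minimizers exist and are unique.) Residuals: $r_k=Ax_k-b$, $s_k=Wx_k-y_k$ for $k\ge1$. *)

theory Defs
  imports "HOL-Analysis.Analysis"
begin

definition proper_fun :: "('y \<Rightarrow> ereal) \<Rightarrow> bool" where
  "proper_fun f \<longleftrightarrow> (\<forall>y. f y \<noteq> -\<infinity>) \<and> (\<exists>y. f y \<noteq> \<infinity>)"

definition lsc_fun :: "('y::topological_space \<Rightarrow> ereal) \<Rightarrow> bool" where
  "lsc_fun f \<longleftrightarrow> (\<forall>c::ereal. closed {y. f y \<le> c})"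

definition strongly_convex_with :: "('y::real_normed_vector \<Rightarrow> ereal) \<Rightarrow> real \<Rightarrow> bool" where
  "strongly_convex_with f c0 \<longleftrightarrow>
     (\<forall>y1 y2 t. 0 \<le> t \<and> t \<le> 1 \<longrightarrow>
        f (t *\<^sub>R y1 + (1 - t) *\<^sub>R y2) + ereal (c0 * t * (1 - t) * (norm (y1 - y2))\<^sup>2)
          \<le> ereal t * f y1 + ereal (1 - t) * f y2)"

text \<open>W : D(W) \<subseteq> X -> Y densely defined closed linear operator (values outside D irrelevant).\<close>
definition densely_defined_closed_linear ::
  "('x::real_normed_vector \<Rightarrow> 'y::real_normed_vector) \<Rightarrow> 'x set \<Rightarrow> bool" where
  "densely_defined_closed_linear W D \<longleftrightarrow>
     subspace D \<and> closure D = UNIV \<and>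
     (\<forall>x\<in>D. \<forall>z\<in>D. \<forall>a b. W (a *\<^sub>R x + b *\<^sub>R z) = a *\<^sub>R W x + b *\<^sub>R W z) \<and>
     closed {(x, W x) | x. x \<in> D}"

text \<open>ADMM iterates: x k, y k, lam k, mu k, k = 0,1,...; x 0 is unused.\<close>
definition admm_iterates ::
  "('x::real_inner \<Rightarrow> 'h::real_inner) \<Rightarrow> ('x \<Rightarrow> 'y::real_inner) \<Rightarrow> 'x set \<Rightarrow> ('y \<Rightarrow> ereal)
   \<Rightarrow> 'h \<Rightarrow> real \<Rightarrow> real
   \<Rightarrow> (nat \<Rightarrow> 'x) \<Rightarrow> (nat \<Rightarrow> 'y) \<Rightarrow> (nat \<Rightarrow> 'h) \<Rightarrow> (nat \<Rightarrow> 'y) \<Rightarrow> bool" where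
  "admm_iterates A W D f b \<rho>1 \<rho>2 x y lam mu \<longleftrightarrow>
    (\<forall>k. x (Suc k) \<in> D \<and>
       (\<forall>z\<in>D. inner (lam k) (A (x (Suc k))) + inner (mu k) (W (x (Suc k)))
                + \<rho>1 / 2 * (norm (A (x (Suc k)) - b))\<^sup>2 + \<rho>2 / 2 * (norm (W (x (Suc k)) - y k))\<^sup>2
              \<le> inner (lam k) (A z) + inner (mu k) (W z)
                + \<rho>1 / 2 * (norm (A z - b))\<^sup>2 + \<rho>2 / 2 * (norm (W z - y k))\<^sup>2)) \<and>
    (\<forall>k. \<forall>v. f (y (Suc k)) - ereal (inner (mu k) (y (Suc k)))
                + ereal (\<rho>2 / 2 * (norm (W (x (Suc k)) - y (Suc k)))\<^sup>2)
              \<le> f v - ereal (inner (mu k) v) + ereal (\<rho>2 / 2 * (norm (W (x (Suc k)) - v))\<^sup>2)) \<and>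
    (\<forall>k. lam (Suc k) = lam k + \<rho>1 *\<^sub>R (A (x (Suc k)) - b)) \<and>
    (\<forall>k. mu (Suc k) = mu k + \<rho>2 *\<^sub>R (W (x (Suc k)) - y (Suc k)))"

end

theory Submission
  imports Defs
begin


lemma poslem:
  fixes a c :: real
  assumes h: "\<And>t. 0 < t \<Longrightarrow> t < 1 \<Longrightarrow> 0 \<le> t*a + t\<^sup>2*c"
  shows "0 \<le> a"
proof (rule ccontr)
  assume "\<not> 0 \<le> a" hence a: "a < 0" by simp
  define t where "t = min (1/2) (-a/(2*(\<bar>c\<bar>+1)))"
  have "0 < -a/(2*(\<bar>c\<bar>+1))" using a by (intro divide_pos_pos) auto
  hence t0: "0 < t" by (simp add: t_def)
  have t1: "t < 1" by (simp add: t_def)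
  have "t * \<bar>c\<bar> \<le> (-a/(2*(\<bar>c\<bar>+1))) * \<bar>c\<bar>"
    by (rule mult_right_mono) (auto simp: t_def)
  also have "\<dots> \<le> -a/2"
    using a by (simp add: field_simps)
  finally have tc: "t * \<bar>c\<bar> \<le> -a/2" .
  have "t\<^sup>2*c \<le> t * (t*\<bar>c\<bar>)" using t0 by (simp add: power2_eq_square abs_le_iff mult_left_mono)
  also have "\<dots> \<le> t * (-a/2)" using mult_left_mono[OF tc, of t] t0 by simp
  finally have hh: "t\<^sup>2*c \<le> t * (-a/2)" .
  have "t*a + t\<^sup>2*c \<le> t*a/2" using hh by linarith
  also have "\<dots> < 0" using t0 a by (simp add: mult_pos_neg)
  finally show False using h[OF t0 t1] by simp
qed

lemma zerolem:
  fixes a c :: real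
  assumes h: "\<And>t. 0 \<le> t*a + t\<^sup>2*c"
  shows "a = 0"
proof -
  have "0 \<le> a" by (rule poslem[of a c]) (rule h)
  moreover have "0 \<le> -a" by (rule poslem[of "-a" c]) (metis h[of "-_"] mult_minus_right power2_minus mult_minus_left)
  ultimately show ?thesis by simp
qed

lemma quadexp:
  fixes u v :: "'a::real_inner"
  shows "(norm (u + t *\<^sub>R v))\<^sup>2 = (norm u)\<^sup>2 + 2*t*inner u v + t\<^sup>2*(norm v)\<^sup>2"
  unfolding power2_norm_eq_inner
  by (simp add: inner_add_left inner_add_right inner_commute power2_eq_square algebra_simps)

lemma fin_lem:
  fixes f :: "'y::real_inner \<Rightarrow> ereal"
  assumes pf: "proper_fun f"
    and minz: "\<forall>v. f ys - ereal (inner m ys) + ereal (\<rho>/2 * (norm (w - ys))\<^sup>2)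
                 \<le> f v - ereal (inner m v) + ereal (\<rho>/2 * (norm (w - v))\<^sup>2)"
  shows "\<exists>b. f ys = ereal b"
proof -
  obtain v where v: "f v \<noteq> \<infinity>" using pf unfolding proper_fun_def by auto
  have "f v \<noteq> -\<infinity>" using pf unfolding proper_fun_def by auto
  with v obtain a where a: "f v = ereal a" by (cases "f v") auto
  have "f ys \<noteq> -\<infinity>" using pf unfolding proper_fun_def by auto
  moreover have "f ys \<noteq> \<infinity>"
  proof
    assume "f ys = \<infinity>"
    with minz[rule_format, of v] a show False by simp
  qed
  ultimately show ?thesis by (cases "f ys") auto
qed

lemma sg_lem:
  fixes f :: "'y::real_inner \<Rightarrow> ereal"
  assumes pf: "proper_fun f" and sc: "strongly_convex_with f c0"
    and minz: "\<forall>v. f ys - ereal (inner m ys) + ereal (\<rho>/2 * (norm (w - ys))\<^sup>2)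
                 \<le> f v - ereal (inner m v) + ereal (\<rho>/2 * (norm (w - v))\<^sup>2)"
    and fa: "f v = ereal a" and fb: "f ys = ereal b"
  shows "a \<ge> b + inner (m + \<rho> *\<^sub>R (w - ys)) (v - ys) + c0 * (norm (v - ys))\<^sup>2"
proof -
  define d where "d = v - ys"
  define N where "N = (norm d)\<^sup>2"
  define G where "G = inner (m + \<rho> *\<^sub>R (w - ys)) d"
  have "0 \<le> a - b - G - c0 * N"
  proof (rule poslem[of _ "c0 * N + \<rho>/2 * N"])
    fix t :: real assume t0: "0 < t" and t1: "t < 1"
    define yt where "yt = ys + t *\<^sub>R d"
    have yteq: "t *\<^sub>R v + (1 - t) *\<^sub>R ys = yt"
      by (simp add: yt_def d_def algebra_simps)
    have scI: "f yt + ereal (c0 * t * (1 - t) * N) \<le> ereal t * f v + ereal (1 - t) * f ys"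
      using sc t0 t1 unfolding strongly_convex_with_def N_def d_def
      by (metis yteq d_def less_eq_real_def)
    have "f yt \<noteq> -\<infinity>" using pf unfolding proper_fun_def by auto
    moreover have "f yt \<noteq> \<infinity>" using scI fa fb by auto
    ultimately obtain e where fe: "f yt = ereal e" by (cases "f yt") auto
    from scI fa fb fe have i1: "e + c0 * t * (1 - t) * N \<le> t * a + (1 - t) * b" by simp
    from minz[rule_format, of yt] fb fe have
      i2: "b - inner m ys + \<rho>/2 * (norm (w - ys))\<^sup>2 \<le> e - inner m yt + \<rho>/2 * (norm (w - yt))\<^sup>2"
      by simp
    have e1: "inner m yt = inner m ys + t * inner m d"
      by (simp add: yt_def inner_add_right)
    have weq: "w - yt = (w - ys) + (-t) *\<^sub>R d" by (simp add: yt_def algebra_simps)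
    have e2: "(norm (w - yt))\<^sup>2 = (norm (w - ys))\<^sup>2 - 2*t*inner (w - ys) d + t\<^sup>2 * N"
      unfolding weq quadexp N_def by simp
    have e3: "G = inner m d + \<rho> * inner (w - ys) d"
      by (simp add: G_def inner_add_left)
    have i3: "b \<le> e - t*inner m d - \<rho>*t*inner (w-ys) d + \<rho>/2*t\<^sup>2*N"
      using i2 unfolding e1 e2 by (simp add: algebra_simps)
    have key: "t * (a - b - G - c0 * N) + t\<^sup>2 * (c0 * N + \<rho> / 2 * N)
       = (t*a + (1-t)*b - c0*t*(1-t)*N - e) + (e - t*inner m d - \<rho>*t*inner (w-ys) d + \<rho>/2*t\<^sup>2*N - b)"
      unfolding e3 by (simp add: algebra_simps power2_eq_square)
    show "0 \<le> t * (a - b - G - c0 * N) + t\<^sup>2 * (c0 * N + \<rho> / 2 * N)"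
      unfolding key using i1 i3 by (simp add: algebra_simps)
  qed
  thus ?thesis by (simp add: G_def N_def d_def)
qed

lemma final_ineq:
  fixes R1 R0 :: "'h::real_inner" and a p q s :: "'y::real_inner"
  assumes H1: "\<rho>1 * inner R1 (R1 - R0) + \<rho>2 * inner (a + p - q) (a + p - s) = 0"
    and H2: "\<rho>2 * inner a p \<ge> 2*c0*(norm p)\<^sup>2"
    and r2: "\<rho>2 \<ge> 0"
  shows "(\<rho>1 * (norm R1)\<^sup>2 + \<rho>2 * (norm a)\<^sup>2 + \<rho>2*(norm p)\<^sup>2)
        - (\<rho>1*(norm R0)\<^sup>2 + \<rho>2*(norm s)\<^sup>2 + \<rho>2*(norm q)\<^sup>2)
        \<le> -\<rho>1*(norm (R1-R0))\<^sup>2 - 4*c0*(norm p)\<^sup>2"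
proof -
  have h3: "0 \<le> \<rho>2 * inner (a+p-s-q) (a+p-s-q)" using r2 by simp
  have key: "((\<rho>1 * (norm R1)\<^sup>2 + \<rho>2 * (norm a)\<^sup>2 + \<rho>2*(norm p)\<^sup>2)
        - (\<rho>1*(norm R0)\<^sup>2 + \<rho>2*(norm s)\<^sup>2 + \<rho>2*(norm q)\<^sup>2))
        - (-\<rho>1*(norm (R1-R0))\<^sup>2 - 4*c0*(norm p)\<^sup>2)
     = 2*(\<rho>1 * inner R1 (R1 - R0) + \<rho>2 * inner (a + p - q) (a + p - s))
       - \<rho>2 * inner (a+p-s-q) (a+p-s-q) - 2*(\<rho>2 * inner a p - 2*c0*(norm p)\<^sup>2)"
    unfolding power2_norm_eq_inner
    by (simp add: inner_add_left inner_add_right inner_diff_left inner_diff_right inner_commute algebra_simps)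
  show ?thesis using key H1 H2 h3 by (smt (verit))
qed


theorem lemma2p4:
  fixes A :: "'x::{real_inner,complete_space} \<Rightarrow> 'h::{real_inner,complete_space}"
    and W :: "'x \<Rightarrow> 'y::{real_inner,complete_space}"
    and D :: "'x set"
    and f :: "'y \<Rightarrow> ereal"
    and b :: 'h and c0 c1 \<rho>1 \<rho>2 :: real
    and x :: "nat \<Rightarrow> 'x" and y :: "nat \<Rightarrow> 'y" and lam :: "nat \<Rightarrow> 'h" and mu :: "nat \<Rightarrow> 'y"
    and r :: "nat \<Rightarrow> 'h" and s :: "nat \<Rightarrow> 'y" and E :: "nat \<Rightarrow> real"
  assumes A1: "bounded_linear A"
    and A2: "proper_fun f" "lsc_fun f" "c0 > 0" "strongly_convex_with f c0"
    and A3: "densely_defined_closed_linear W D"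
    and A4: "c1 > 0" "\<forall>z\<in>D. (norm (A z))\<^sup>2 + (norm (W z))\<^sup>2 \<ge> c1 * (norm z)\<^sup>2"
    and rho: "\<rho>1 > 0" "\<rho>2 > 0"
    and iter: "admm_iterates A W D f b \<rho>1 \<rho>2 x y lam mu"
    and r_def: "\<forall>k\<ge>1. r k = A (x k) - b"
    and s_def: "\<forall>k\<ge>1. s k = W (x k) - y k"
    and E_def: "\<forall>k\<ge>1. E k = \<rho>1 * (norm (r k))\<^sup>2 + \<rho>2 * (norm (s k))\<^sup>2
                              + \<rho>2 * (norm (y k - y (k - 1)))\<^sup>2"
  shows "(\<forall>k\<ge>1. E (k + 1) - E k \<le> - \<rho>1 * (norm (r (k + 1) - r k))\<^sup>2
                                   - 4 * c0 * (norm (y (k + 1) - y k))\<^sup>2)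
         \<and> (\<forall>k\<ge>1. E (k + 1) \<le> E k)
         \<and> summable (\<lambda>k. (norm (y (k + 2) - y (k + 1)))\<^sup>2)"
  proof -
  note it = iter[unfolded admm_iterates_def]
  have xD: "\<And>k. x (Suc k) \<in> D" using it by blast
  have xmin: "\<And>k z. z \<in> D \<Longrightarrow> inner (lam k) (A (x (Suc k))) + inner (mu k) (W (x (Suc k)))
                + \<rho>1 / 2 * (norm (A (x (Suc k)) - b))\<^sup>2 + \<rho>2 / 2 * (norm (W (x (Suc k)) - y k))\<^sup>2
              \<le> inner (lam k) (A z) + inner (mu k) (W z)
                + \<rho>1 / 2 * (norm (A z - b))\<^sup>2 + \<rho>2 / 2 * (norm (W z - y k))\<^sup>2"
    using it by blast
  have ymin: "\<And>k. \<forall>v. f (y (Suc k)) - ereal (inner (mu k) (y (Suc k)))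
                + ereal (\<rho>2 / 2 * (norm (W (x (Suc k)) - y (Suc k)))\<^sup>2)
              \<le> f v - ereal (inner (mu k) v) + ereal (\<rho>2 / 2 * (norm (W (x (Suc k)) - v))\<^sup>2)"
    using it by blast
  have lamS: "\<And>k. lam (Suc k) = lam k + \<rho>1 *\<^sub>R (A (x (Suc k)) - b)" using it by blast
  have muS: "\<And>k. mu (Suc k) = mu k + \<rho>2 *\<^sub>R (W (x (Suc k)) - y (Suc k))" using it by blast
  have sub: "subspace D" using A3 unfolding densely_defined_closed_linear_def by blast
  have Wlin: "\<And>u v a c. u \<in> D \<Longrightarrow> v \<in> D \<Longrightarrow> W (a *\<^sub>R u + c *\<^sub>R v) = a *\<^sub>R W u + c *\<^sub>R W v"
    using A3 unfolding densely_defined_closed_linear_def by blast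
  have X: "inner (lam (Suc k)) (A d) + inner (mu (Suc k) + \<rho>2 *\<^sub>R (y (Suc k) - y k)) (W d) = 0"
    if dD: "d \<in> D" for k d
  proof -
    define xk where "xk = x (Suc k)"
    have xkD: "xk \<in> D" using xD by (simp add: xk_def)
    define L where "L = inner (lam k) (A d) + inner (mu k) (W d) + \<rho>1 * inner (A xk - b) (A d)
       + \<rho>2 * inner (W xk - y k) (W d)"
    define Q where "Q = \<rho>1/2 * (norm (A d))\<^sup>2 + \<rho>2/2*(norm (W d))\<^sup>2"
    have "0 \<le> t*L + t\<^sup>2*Q" for t
    proof -
      have zD: "xk + t *\<^sub>R d \<in> D" using sub xkD dD by (simp add: subspace_add subspace_scale)
      have Az: "A (xk + t *\<^sub>R d) = A xk + t *\<^sub>R A d"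
        using linear_add[OF bounded_linear.linear[OF A1]] linear_scale[OF bounded_linear.linear[OF A1]] by simp
      have Wz: "W (xk + t *\<^sub>R d) = W xk + t *\<^sub>R W d"
        using Wlin[OF xkD dD, of 1 t] by simp
      have n1: "(norm (A xk + t *\<^sub>R A d - b))\<^sup>2 = (norm (A xk - b))\<^sup>2 + 2*t*inner (A xk - b) (A d) + t\<^sup>2*(norm (A d))\<^sup>2"
      proof -
        have "A xk + t *\<^sub>R A d - b = (A xk - b) + t *\<^sub>R A d" by simp
        thus ?thesis by (simp only: quadexp)
      qed
      have n2: "(norm (W xk + t *\<^sub>R W d - y k))\<^sup>2 = (norm (W xk - y k))\<^sup>2 + 2*t*inner (W xk - y k) (W d) + t\<^sup>2*(norm (W d))\<^sup>2"
      proof -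
        have "W xk + t *\<^sub>R W d - y k = (W xk - y k) + t *\<^sub>R W d" by simp
        thus ?thesis by (simp only: quadexp)
      qed
      note ineq = xmin[where k=k and z="xk + t *\<^sub>R d", folded xk_def, OF zD]
      have ineq2: "inner (lam k) (A xk) + inner (mu k) (W xk)
                + \<rho>1 / 2 * (norm (A xk - b))\<^sup>2 + \<rho>2 / 2 * (norm (W xk - y k))\<^sup>2
              \<le> inner (lam k) (A xk) + t * inner (lam k) (A d) + inner (mu k) (W xk) + t * inner (mu k) (W d)
                + \<rho>1 / 2 * ((norm (A xk - b))\<^sup>2 + 2*t*inner (A xk - b) (A d) + t\<^sup>2*(norm (A d))\<^sup>2)
                + \<rho>2 / 2 * ((norm (W xk - y k))\<^sup>2 + 2*t*inner (W xk - y k) (W d) + t\<^sup>2*(norm (W d))\<^sup>2)"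
        using ineq unfolding Az Wz n1 n2 by (simp add: inner_add_right algebra_simps)
      have key: "t*L + t\<^sup>2*Q = (inner (lam k) (A xk) + t * inner (lam k) (A d) + inner (mu k) (W xk) + t * inner (mu k) (W d)
                + \<rho>1 / 2 * ((norm (A xk - b))\<^sup>2 + 2*t*inner (A xk - b) (A d) + t\<^sup>2*(norm (A d))\<^sup>2)
                + \<rho>2 / 2 * ((norm (W xk - y k))\<^sup>2 + 2*t*inner (W xk - y k) (W d) + t\<^sup>2*(norm (W d))\<^sup>2))
           - (inner (lam k) (A xk) + inner (mu k) (W xk)
                + \<rho>1 / 2 * (norm (A xk - b))\<^sup>2 + \<rho>2 / 2 * (norm (W xk - y k))\<^sup>2)"
        unfolding L_def Q_def by (simp add: algebra_simps)
      show ?thesis unfolding key using ineq2 by linarith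
    qed
    hence "L = 0" by (rule zerolem)
    thus ?thesis unfolding L_def lamS muS xk_def
      by (simp add: inner_add_left algebra_simps)
  qed
  have fin: "\<And>k. \<exists>c. f (y (Suc k)) = ereal c"
    using fin_lem[OF A2(1) ymin] by blast
  have step: "E (k + 1) - E k \<le> - \<rho>1 * (norm (r (k + 1) - r k))\<^sup>2
                                   - 4 * c0 * (norm (y (k + 1) - y k))\<^sup>2" if k1: "k \<ge> 1" for k
  proof -
    obtain j where kj: "k = Suc j" using k1 by (cases k) auto
    obtain bk where bk: "f (y k) = ereal bk" using fin[of j] kj by blast
    obtain bk1 where bk1: "f (y (Suc k)) = ereal bk1" using fin[of k] by blast
    define p where "p = y (Suc k) - y k"
    have s1: "bk \<ge> bk1 + inner (mu (Suc k)) (y k - y (Suc k)) + c0 * (norm (y k - y (Suc k)))\<^sup>2"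
      using sg_lem[OF A2(1) A2(4) ymin[of k] bk bk1] muS[of k] by simp
    have s2: "bk1 \<ge> bk + inner (mu k) (y (Suc k) - y k) + c0 * (norm (y (Suc k) - y k))\<^sup>2"
      using sg_lem[OF A2(1) A2(4) ymin[of j], of "y (Suc k)" bk1 bk] bk bk1 muS[of j] kj by simp
    have nm: "norm (y k - y (Suc k)) = norm p" by (simp add: p_def norm_minus_commute)
    have ip: "inner (mu (Suc k)) (y k - y (Suc k)) = - inner (mu (Suc k)) p"
      by (simp add: p_def inner_diff_right)
    have "inner (mu (Suc k) - mu k) p \<ge> 2*c0*(norm p)\<^sup>2"
      using s1 s2 unfolding nm ip by (simp add: p_def[symmetric] inner_diff_left)
    moreover have "mu (Suc k) - mu k = \<rho>2 *\<^sub>R s (Suc k)" using muS[of k] s_def by simp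
    ultimately have H2: "\<rho>2 * inner (s (Suc k)) p \<ge> 2*c0*(norm p)\<^sup>2" by simp
    define d where "d = x (Suc k) - x k"
    have dD: "d \<in> D" unfolding d_def using xD[of k] xD[of j] kj sub by (simp add: subspace_diff)
    have Ad: "A d = r (Suc k) - r k" using r_def k1 linear_diff[OF bounded_linear.linear[OF A1]] by (simp add: d_def)
    have "W d = W (x (Suc k)) - W (x k)"
      using Wlin[of "x (Suc k)" "x k" 1 "-1"] xD[of k] xD[of j] kj by (simp add: d_def)
    hence Wd: "W d = s (Suc k) + p - s k" using s_def k1 by (simp add: p_def)
    note Xk = X[OF dD, of k]
    note Xj = X[OF dD, of j]
    have H1: "\<rho>1 * inner (r (Suc k)) (r (Suc k) - r k)
        + \<rho>2 * inner (s (Suc k) + p - (y k - y (k - 1))) (s (Suc k) + p - s k) = 0"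
    proof -
      have "inner (lam (Suc k) - lam k) (A d)
         + inner (mu (Suc k) - mu k + \<rho>2 *\<^sub>R (y (Suc k) - y k) - \<rho>2 *\<^sub>R (y k - y j)) (W d) = 0"
        using Xk Xj kj by (simp add: inner_diff_left inner_add_left)
      moreover have "lam (Suc k) - lam k = \<rho>1 *\<^sub>R r (Suc k)" using lamS[of k] r_def by simp
      moreover have "mu (Suc k) - mu k = \<rho>2 *\<^sub>R s (Suc k)" using muS[of k] s_def by simp
      ultimately show ?thesis unfolding Ad Wd using kj
        by (simp add: p_def inner_add_left inner_diff_left algebra_simps)
    qed
    have "(\<rho>1 * (norm (r (Suc k)))\<^sup>2 + \<rho>2 * (norm (s (Suc k)))\<^sup>2 + \<rho>2*(norm p)\<^sup>2)
        - (\<rho>1*(norm (r k))\<^sup>2 + \<rho>2*(norm (s k))\<^sup>2 + \<rho>2*(norm (y k - y (k - 1)))\<^sup>2)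
        \<le> -\<rho>1*(norm (r (Suc k) - r k))\<^sup>2 - 4*c0*(norm p)\<^sup>2"
      by (rule final_ineq[OF H1 H2]) (use rho in simp)
    moreover have "E (k+1) = \<rho>1 * (norm (r (Suc k)))\<^sup>2 + \<rho>2 * (norm (s (Suc k)))\<^sup>2 + \<rho>2*(norm p)\<^sup>2"
      using E_def by (simp add: p_def)
    moreover have "E k = \<rho>1*(norm (r k))\<^sup>2 + \<rho>2*(norm (s k))\<^sup>2 + \<rho>2*(norm (y k - y (k - 1)))\<^sup>2"
      using E_def k1 by simp
    ultimately show ?thesis by (simp add: p_def)
  qed
  have mono: "E (k + 1) \<le> E k" if "k \<ge> 1" for k
  proof -
    have "0 \<le> \<rho>1 * (norm (r (k + 1) - r k))\<^sup>2" using rho by simp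
    moreover have "0 \<le> 4 * c0 * (norm (y (k + 1) - y k))\<^sup>2" using A2(3) by simp
    ultimately show ?thesis using step[OF that] by linarith
  qed
  have Enn: "E k \<ge> 0" if "k \<ge> 1" for k
    using E_def that rho by simp
  have ps: "(\<Sum>i<n. 4 * c0 * (norm (y (i + 2) - y (i + 1)))\<^sup>2) \<le> E 1 - E (n + 1)" for n
  proof (induction n)
    case 0 then show ?case by simp
  next
    case (Suc n)
    have "E (Suc n + 1) - E (Suc n) \<le> - \<rho>1 * (norm (r (Suc n + 1) - r (Suc n)))\<^sup>2
        - 4*c0*(norm (y (Suc n + 1) - y (Suc n)))\<^sup>2" using step[of "Suc n"] by simp
    moreover have "0 \<le> \<rho>1 * (norm (r (Suc n + 1) - r (Suc n)))\<^sup>2" using rho by simp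
    ultimately have "4*c0*(norm (y (Suc n + 1) - y (Suc n)))\<^sup>2 \<le> E (Suc n) - E (Suc n + 1)"
      by linarith
    then show ?case using Suc by (simp add: numeral_2_eq_2)
  qed
  have summ: "summable (\<lambda>k. (norm (y (k + 2) - y (k + 1)))\<^sup>2)"
  proof (rule summableI_nonneg_bounded)
    fix n
    have "(\<Sum>i<n. 4 * c0 * (norm (y (i + 2) - y (i + 1)))\<^sup>2) \<le> E 1"
      using ps[of n] Enn[of "n+1"] by simp
    hence "4 * c0 * (\<Sum>i<n. (norm (y (i + 2) - y (i + 1)))\<^sup>2) \<le> E 1"
      by (simp add: sum_distrib_left mult.assoc)
    thus "(\<Sum>i<n. (norm (y (i + 2) - y (i + 1)))\<^sup>2) \<le> E 1 / (4 * c0)"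
      using A2(3) by (simp add: field_simps)
  qed simp
  show ?thesis using step mono summ by blast
qed

end
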